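(* Let $k\ge 16$, $n=2^k$, $t=\lceil 2\log k\rceil$, and let $P$ be an isothetic drawing of the Horton set of $n$ points with slab $R$ as in the context. Then either $P$ has size at least $n^{\frac12\log n}$, or there exist vertical lines $\ell_1,\ell_2,\ell_3,\ell_4$, ordered from left to right and all contained in the interior of $R$, such that exactly $2^{k-t}$ points of $P$ lie between $\ell_1$ and $\ell_2$, exactly $2^{k-t}$ points of $P$ lie between $\ell_3$ and $\ell_4$, and, writing $d_1$ for the distance between $\ell_1$ and $\ell_2$ and $d_2$ for the distance between $\ell_3$ and $\ell_4$, we have $\frac12\le d_1/d_2\le 2$.
   Context: All logarithms are base 2. For a finite set $S$ of points in the plane with pairwise distinct $x$-coordinates, list its points in increasing order of $x$-coordinate as $p_0,\dots,p_{|S|-1}$ and set $S_{\mathrm{even}}=\{p_0,p_2,\dots\}$, $S_{\mathrm{odd}}=\{p_1,p_3,\dots\}$. For point sets $X,Y$, $X$ is high above $Y$ if every line through two points of $X$ lies strictly above every point of $Y$ and every line through two points of $Y$ lies strictly below every point of $X$. A Horton set of $2^k$ points is defined recursively: a set $H$ of $2^k$ points, no three collinear, with pairwise distinct $x$-coordinates, such that for $k=0$ it is a single point and for $k\ge1$ both $H_{\mathrm{even}}$ and $H_{\mathrm{odd}}$ are Horton sets of $2^{k-1}$ points and $H_{\mathrm{odd}}$ is high above $H_{\mathrm{even}}$. An isothetic drawing of the Horton set of $n=2^k$ points is a Horton set of $n$ points all of whose points have integer coordinates. The size of a set of points is the maximum absolute value of the coordinates of its points. With $p_0,\dots,p_{n-1}$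 the points of $P$ sorted by $x$-coordinate, $R$ is the closed vertical slab bounded by the vertical lines through $p_{n/4}$ and $p_{3n/4-1}$. *)

theory Defs
  imports Complex_Main
begin

type_synonym point = "real \<times> real"

text \<open>Number of points of S with strictly smaller x-coordinate (the index of p in the
  x-sorted order, when x-coordinates are pairwise distinct).\<close>
definition xrank :: "point set \<Rightarrow> point \<Rightarrow> nat" where
  "xrank S p = card {q \<in> S. fst q < fst p}"

text \<open>The i-th point p_i of S in increasing order of x-coordinate (0-based).\<close>
definition xpt :: "point set \<Rightarrow> nat \<Rightarrow> point" where
  "xpt S i = (THE p. p \<in> S \<and> xrank S p = i)"

definition S_even :: "point set \<Rightarrow> point set" where
  "S_even S = {p \<in> S. even (xrank S p)}"

definition S_odd :: "point set \<Rightarrow> point set" where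
  "S_odd S = {p \<in> S. odd (xrank S p)}"

definition distinct_x :: "point set \<Rightarrow> bool" where
  "distinct_x S \<longleftrightarrow> (\<forall>p\<in>S. \<forall>q\<in>S. fst p = fst q \<longrightarrow> p = q)"

definition collinear3 :: "point \<Rightarrow> point \<Rightarrow> point \<Rightarrow> bool" where
  "collinear3 p q r \<longleftrightarrow>
     (fst q - fst p) * (snd r - snd p) = (snd q - snd p) * (fst r - fst p)"

definition no_three_collinear :: "point set \<Rightarrow> bool" where
  "no_three_collinear S \<longleftrightarrow>
     (\<forall>p\<in>S. \<forall>q\<in>S. \<forall>r\<in>S. p \<noteq> q \<and> p \<noteq> r \<and> q \<noteq> r \<longrightarrow> \<not> collinear3 p q r)"

definition line_above :: "point \<Rightarrow> point \<Rightarrow> point \<Rightarrow> bool" where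
  "line_above p q r \<longleftrightarrow> fst p \<noteq> fst q \<and>
     snd r < snd p + (snd q - snd p) / (fst q - fst p) * (fst r - fst p)"

definition line_below :: "point \<Rightarrow> point \<Rightarrow> point \<Rightarrow> bool" where
  "line_below p q r \<longleftrightarrow> fst p \<noteq> fst q \<and>
     snd r > snd p + (snd q - snd p) / (fst q - fst p) * (fst r - fst p)"

definition high_above :: "point set \<Rightarrow> point set \<Rightarrow> bool" where
  "high_above X Y \<longleftrightarrow>
     (\<forall>p\<in>X. \<forall>q\<in>X. p \<noteq> q \<longrightarrow> (\<forall>r\<in>Y. line_above p q r)) \<and>
     (\<forall>p\<in>Y. \<forall>q\<in>Y. p \<noteq> q \<longrightarrow> (\<forall>r\<in>X. line_below p q r))"

fun horton :: "nat \<Rightarrow> point set \<Rightarrow> bool" where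
  "horton 0 H \<longleftrightarrow> card H = 1 \<and> no_three_collinear H \<and> distinct_x H"
| "horton (Suc k) H \<longleftrightarrow> finite H \<and> card H = 2 ^ Suc k \<and> no_three_collinear H \<and> distinct_x H
     \<and> horton k (S_even H) \<and> horton k (S_odd H) \<and> high_above (S_odd H) (S_even H)"

definition isothetic_horton :: "nat \<Rightarrow> point set \<Rightarrow> bool" where
  "isothetic_horton k P \<longleftrightarrow> horton k P \<and> (\<forall>p\<in>P. fst p \<in> \<int> \<and> snd p \<in> \<int>)"

definition point_set_size :: "point set \<Rightarrow> real" where
  "point_set_size S = Max ((\<lambda>p. max \<bar>fst p\<bar> \<bar>snd p\<bar>) ` S)"

definition strip_count :: "point set \<Rightarrow> real \<Rightarrow> real \<Rightarrow> nat" where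
  "strip_count P a b = card {p \<in> P. a \<le> fst p \<and> fst p \<le> b}"

end

theory Submission imports Defs begin

lemma horton_basic: "horton k P \<Longrightarrow> finite P \<and> card P = 2^k \<and> distinct_x P"
  by (cases k) (auto intro: card_ge_0_finite)

lemma sorted_setup:
  assumes fin: "finite P" and dx: "distinct_x P" and cP: "card P = n"
  obtains f where "\<And>i j. i < j \<Longrightarrow> j < n \<Longrightarrow> f i < f j"
    "fst ` P = f ` {..<n}"
    "\<And>i. i < n \<Longrightarrow> fst (xpt P i) = f i"
    "\<And>a b. a \<le> b \<Longrightarrow> b < n \<Longrightarrow> strip_count P (f a) (f b) = b - a + 1"
proof -
  have inj: "inj_on fst P" using dx unfolding distinct_x_def inj_on_def by blast
  have cX: "card (fst ` P) = n" using card_image[OF inj] cP by simp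
  obtain l where l: "sorted_wrt (<) l" "set l = fst ` P" "length l = n"
    using sorted_list_of_set.finite_set_strict_sorted[of "fst ` P"] fin cX by auto
  define f where "f = (\<lambda>i. l ! i)"
  have mono: "\<And>i j. i < j \<Longrightarrow> j < n \<Longrightarrow> f i < f j"
    using l unfolding f_def sorted_wrt_iff_nth_less by auto
  have monoiff: "\<And>i j. i < n \<Longrightarrow> j < n \<Longrightarrow> f i < f j \<longleftrightarrow> i < j"
    by (metis mono linorder_neqE_nat order_less_asym order_less_irrefl)
  have monole: "\<And>i j. i < n \<Longrightarrow> j < n \<Longrightarrow> f i \<le> f j \<longleftrightarrow> i \<le> j"
    by (metis monoiff linorder_not_le)
  have img: "fst ` P = f ` {..<n}"
    using l unfolding f_def by (metis atLeast_upt image_set map_nth set_map)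
  have injf: "inj_on f {..<n}"
    by (smt (verit) inj_onI lessThan_iff linorder_neqE_nat mono)
  have cnt: "card {p \<in> P. Q (fst p)} = card {i\<in>{..<n}. Q (f i)}" for Q
  proof -
    have "card {p \<in> P. Q (fst p)} = card (fst ` {p \<in> P. Q (fst p)})"
      by (rule card_image[symmetric]) (rule inj_on_subset[OF inj], auto)
    also have "fst ` {p \<in> P. Q (fst p)} = f ` {i\<in>{..<n}. Q (f i)}"
    proof -
      have "fst ` {p \<in> P. Q (fst p)} = {x \<in> fst ` P. Q x}" by blast
      also have "\<dots> = {x \<in> f ` {..<n}. Q x}" using img by simp
      also have "\<dots> = f ` {i\<in>{..<n}. Q (f i)}" by blast
      finally show ?thesis .
    qed
    also have "card \<dots> = card {i\<in>{..<n}. Q (f i)}"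
      by (rule card_image) (rule inj_on_subset[OF injf], auto)
    finally show ?thesis .
  qed
  have xp: "fst (xpt P i) = f i" if i: "i < n" for i
  proof -
    obtain p where p: "p \<in> P" "fst p = f i" using img i by (metis imageE image_eqI lessThan_iff)
    have rk: "xrank P q = j" if "q \<in> P" "fst q = f j" "j < n" for q j
    proof -
      have "xrank P q = card {i'\<in>{..<n}. f i' < f j}" unfolding xrank_def using cnt that by simp
      also have "{i'\<in>{..<n}. f i' < f j} = {..<j}" using monoiff that by auto
      finally show ?thesis by simp
    qed
    have "xpt P i = p" unfolding xpt_def
    proof (rule the_equality)
      show "p \<in> P \<and> xrank P p = i" using rk p i by auto
      fix p' assume h: "p' \<in> P \<and> xrank P p' = i"
      then obtain j where j: "j < n" "fst p' = f j" using img by (metis imageE image_eqI lessThan_iff)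
      have "j = i" using rk[of p' j] h j by simp
      thus "p' = p" using j p h dx unfolding distinct_x_def by metis
    qed
    thus ?thesis using p by simp
  qed
  have sc: "strip_count P (f a) (f b) = b - a + 1" if "a \<le> b" "b < n" for a b
  proof -
    have "strip_count P (f a) (f b) = card {i\<in>{..<n}. f a \<le> f i \<and> f i \<le> f b}"
      unfolding strip_count_def using cnt by simp
    also have "{i\<in>{..<n}. f a \<le> f i \<and> f i \<le> f b} = {a..b}" using monole that by auto
    finally show ?thesis using that by simp
  qed
  show ?thesis using that mono img xp sc by blast
qed

lemma geom:
  fixes W :: "real set"
  assumes "finite W" "W \<noteq> {}" "\<forall>x\<in>W. x \<ge> c" "c > 0"
    "\<forall>x\<in>W. \<forall>y\<in>W. x < y \<longrightarrow> 2*x < y"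
  shows "Max W \<ge> 2^(card W - 1) * c"
  using assms
proof (induct "card W" arbitrary: W rule: less_induct)
  case less
  show ?case
  proof (cases "card W = 1")
    case True
    then obtain x where "W = {x}" using card_1_singletonE by blast
    thus ?thesis using less by simp
  next
    case False
    define M where "M = Max W"
    define W' where "W' = W - {M}"
    have MW: "M \<in> W" using less M_def by simp
    have cW: "card W' = card W - 1" using MW less W'_def by simp
    have "card W > 0" using less(2,3) by (simp add: card_gt_0_iff)
    hence cpos: "card W \<ge> 2" using False by linarith
    have ne: "W' \<noteq> {}"
    proof
      assume "W' = {}"
      hence "card W' = 0" by simp
      thus False using cW cpos by simp
    qed
    have fW': "finite W'" using less W'_def by simp
    have IH: "Max W' \<ge> 2^(card W' - 1) * c"
      using less(1)[of W'] cW cpos fW' ne less(4,5,6) W'_def by auto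
    have M'in: "Max W' \<in> W'" using fW' ne by simp
    have "Max W' < M" using M'in W'_def less M_def by (metis DiffD1 DiffD2 Max_ge insertI1 order_le_neq_trans)
    hence "2 * Max W' < M" using less(6) M'in MW W'_def by blast
    moreover have "card W - 1 = Suc (card W' - 1)" using cW cpos by simp
    ultimately show ?thesis using IH M_def by simp
  qed
qed

lemma k_sq: "16 \<le> k \<Longrightarrow> (k::nat)^2 < 2^(k-5)"
proof (induct k rule: nat_induct_at_least)
  case base then show ?case by simp
next
  case (Suc k)
  have "(Suc k)^2 \<le> 2 * k^2" proof -
    have "16*k \<le> k*k" using Suc(1) by simp
    moreover have "k \<ge> 16" using Suc(1) .
    moreover have "(Suc k)^2 = k*k + 2*k + 1" "2*k^2 = 2*(k*k)" by (simp_all add: power2_eq_square)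
    ultimately show ?thesis by linarith
  qed
  also have "\<dots> < 2 * 2^(k-5)" using Suc by simp
  also have "\<dots> = 2^(Suc k - 5)" using Suc(1)
  proof -
    have "Suc k - 5 = Suc (k - 5)" using Suc(1) by simp
    thus ?thesis by simp
  qed
  finally show ?case .
qed

lemma t_bounds:
  assumes "16 \<le> k" "t = nat \<lceil>2 * log 2 (real k)\<rceil>"
  shows "real k ^ 2 \<le> 2 ^ t" "t + 5 \<le> k"
proof -
  have kpos: "real k > 0" using assms by simp
  have lg: "2 * log 2 (real k) = log 2 (real k ^ 2)" using kpos by (simp add: log_nat_power)
  have "real (k^2) < real (2^(k-5))" using k_sq[OF assms(1)] by linarith
  hence "real k ^ 2 < 2 ^ (k-5)" by simp
  hence "log 2 (real k ^ 2) < log 2 (2 ^ (k-5))" using kpos by (subst log_less_cancel_iff) auto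
  moreover have "log 2 (2 ^ (k-5) :: real) = real (k-5)" by (simp add: log_nat_power)
  ultimately have "2 * log 2 (real k) < real (k - 5)" using lg by linarith
  hence "\<lceil>2 * log 2 (real k)\<rceil> \<le> int (k - 5)" by (simp add: ceiling_le_iff)
  hence "t \<le> nat (int (k - 5))" unfolding assms(2) by (rule nat_mono)
  thus "t + 5 \<le> k" using assms(1) by simp
  have "2 * log 2 (real k) \<le> real t" unfolding assms(2) by (rule real_nat_ceiling_ge)
  hence "2 powr (2 * log 2 (real k)) \<le> 2 powr (real t)" by simp
  moreover have "2 powr (2 * log 2 (real k)) = real k ^ 2"
    unfolding lg using kpos by simp
  ultimately show "real k ^ 2 \<le> 2 ^ t" by (simp add: powr_realpow)
qed


lemma int_step: "(x::real) \<in> \<int> \<Longrightarrow> y \<in> \<int> \<Longrightarrow> x < y \<Longrightarrow> x + 1 \<le> y"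
  by (metis Ints_cases of_int_less_iff of_int_1 of_int_add zless_imp_add1_zle of_int_le_iff)

lemma spacing:
  assumes "\<And>i j. i < j \<Longrightarrow> j < n \<Longrightarrow> (f::nat\<Rightarrow>real) i < f j" "\<And>i. i < n \<Longrightarrow> f i \<in> \<int>"
  shows "a \<le> b \<Longrightarrow> b < n \<Longrightarrow> f b - f a \<ge> real (b - a)"
proof (induct b rule: dec_induct)
  case base then show ?case by simp
next
  case (step b)
  have "f b + 1 \<le> f (Suc b)" using assms step by (intro int_step) auto
  moreover have "real (Suc b - a) = real (b - a) + 1" using step by (simp add: Suc_diff_le)
  ultimately show ?case using step by simp
qed

theorem lemma3:
  fixes k :: nat and P :: "point set"
  assumes "k \<ge> 16"
    and "isothetic_horton k P"
  defines "n \<equiv> (2::nat) ^ k"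
    and "t \<equiv> nat \<lceil>2 * log 2 (real k)\<rceil>"
  shows "point_set_size P \<ge> real n powr ((1/2) * log 2 (real n))
    \<or> (\<exists>a1 a2 a3 a4 :: real.
          fst (xpt P (n div 4)) < a1 \<and> a1 < a2 \<and> a2 < a3 \<and> a3 < a4 \<and>
          a4 < fst (xpt P (3 * n div 4 - 1)) \<and>
          strip_count P a1 a2 = 2 ^ (k - t) \<and>
          strip_count P a3 a4 = 2 ^ (k - t) \<and>
          1/2 \<le> (a2 - a1) / (a4 - a3) \<and> (a2 - a1) / (a4 - a3) \<le> 2)"
proof (rule disjCI)
  assume neg: "\<not> (\<exists>a1 a2 a3 a4 :: real.
          fst (xpt P (n div 4)) < a1 \<and> a1 < a2 \<and> a2 < a3 \<and> a3 < a4 \<and>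
          a4 < fst (xpt P (3 * n div 4 - 1)) \<and>
          strip_count P a1 a2 = 2 ^ (k - t) \<and>
          strip_count P a3 a4 = 2 ^ (k - t) \<and>
          1/2 \<le> (a2 - a1) / (a4 - a3) \<and> (a2 - a1) / (a4 - a3) \<le> 2)"
  have hb: "finite P" "card P = n" "distinct_x P"
    using horton_basic[of k P] assms(2) unfolding isothetic_horton_def n_def by auto
  have intP: "\<forall>p\<in>P. fst p \<in> \<int>" using assms(2) unfolding isothetic_horton_def by auto
  obtain f where fmono: "\<And>i j. i < j \<Longrightarrow> j < n \<Longrightarrow> f i < f j"
    and fimg: "fst ` P = f ` {..<n}"
    and fxp: "\<And>i. i < n \<Longrightarrow> fst (xpt P i) = f i"
    and fsc: "\<And>a b. a \<le> b \<Longrightarrow> b < n \<Longrightarrow> strip_count P (f a) (f b) = b - a + 1"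
    using sorted_setup[OF hb(1) hb(3) hb(2)] by blast
  have fint: "f i \<in> \<int>" if "i < n" for i
  proof -
    have "f i \<in> fst ` P" using fimg that by auto
    thus ?thesis using intP by auto
  qed
  have fP: "\<exists>p\<in>P. fst p = f i" if "i < n" for i
  proof -
    have "f i \<in> fst ` P" using fimg that by auto
    thus ?thesis by force
  qed
  have tb: "real k ^ 2 \<le> 2 ^ t" "t + 5 \<le> k" using t_bounds[OF assms(1), of t] unfolding t_def by auto
  have t8: "t \<ge> 8"
  proof (rule ccontr)
    assume "\<not> t \<ge> 8"
    hence "(2::real)^t < 2^8" by (intro power_strict_increasing) auto
    hence "(2::real)^t < 256" by simp
    moreover have "real k ^ 2 \<ge> 16^2" using assms(1) by (intro power_mono) auto
    ultimately show False using tb(1) by simp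
  qed
  define s where "s = (2::nat)^(k-t)"
  define q where "q = (2::nat)^(k-2)"
  define m where "m = (2::nat)^(t-1) - 1"
  have n4: "n = 4*q"
  proof -
    have "k = (k-2)+2" using assms(1) by simp
    hence "n = 2^((k-2)+2)" unfolding n_def by simp
    thus ?thesis unfolding q_def by (simp add: power_add)
  qed
  have s32: "s \<ge> 32"
  proof -
    have "(2::nat)^5 \<le> 2^(k-t)" using tb(2) by (intro power_increasing) auto
    thus ?thesis unfolding s_def by simp
  qed
  have m2: "m \<ge> 2"
  proof -
    have "(2::nat)^3 \<le> 2^(t-1)" using t8 by (intro power_increasing) auto
    thus ?thesis unfolding m_def by simp
  qed
  have ms: "m * s + s = 2 * q"
  proof -
    have "(2::nat)^(t-1) * 2^(k-t) = 2^(k-1)" using t8 tb(2) by (simp flip: power_add)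
    also have "\<dots> = 2 * q"
    proof -
      have "k - 1 = Suc (k-2)" using assms(1) by simp
      thus ?thesis unfolding q_def by simp
    qed
    moreover have "m + 1 = 2^(t-1)" unfolding m_def by simp
    ultimately have "(m + 1) * s = 2 * q" unfolding s_def by simp
    thus ?thesis by (simp add: algebra_simps)
  qed
  define b where "b i = q + 1 + i*s" for i
  define e where "e i = b i + s - 1" for i
  define w where "w i = f (e i) - f (b i)" for i
  have e_le: "e i \<le> 3*q - 2" if "i < m" for i
  proof -
    have "i*s + s \<le> m*s" using that by (metis Suc_leI mult_Suc mult_le_mono1 add.commute)
    thus ?thesis unfolding e_def b_def using ms s32 by linarith
  qed
  have qpos: "q \<ge> 1" unfolding q_def by simp
  have bq: "q < b i" "b i < e i" for i unfolding e_def b_def using s32 by auto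
  have e_n: "e i < n" if "i < m" for i using e_le[OF that] n4 qpos by linarith
  have b_n: "b i < n" if "i < m" for i using e_n[OF that] bq(2)[of i] by linarith
  have sc: "strip_count P (f (b i)) (f (e i)) = 2^(k-t)" if "i < m" for i
    using fsc[of "b i" "e i"] bq(2)[of i] e_n[OF that] unfolding e_def s_def by simp
  have w_ge: "w i \<ge> real s - 1" if "i < m" for i
  proof -
    have "f (e i) - f (b i) \<ge> real (e i - b i)"
      using spacing[OF fmono fint, where a="b i" and b="e i"] bq(2)[of i] e_n[OF that] by simp
    moreover have "real (e i - b i) = real s - 1" unfolding e_def using s32 by (simp add: of_nat_diff)
    ultimately show ?thesis unfolding w_def by simp
  qed
  have wpos: "w i > 0" if "i < m" for i using w_ge[OF that] s32 by simp
  have sep: "2 * w i < w j \<or> 2 * w j < w i" if ij: "i < j" "j < m" for i j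
  proof -
    have im: "i < m" using ij by simp
    have c1: "fst (xpt P (n div 4)) < f (b i)"
      using fxp[of q] n4 fmono[of q "b i"] bq(1)[of i] b_n[OF im] by simp
    have c2: "f (b i) < f (e i)" using fmono bq(2) e_n[OF im] by blast
    have eb: "e i < b j"
    proof -
      have "i*s + s \<le> j*s" using ij by (metis Suc_leI mult_Suc mult_le_mono1 add.commute)
      thus ?thesis unfolding e_def b_def using s32 by linarith
    qed
    have c3: "f (e i) < f (b j)" using fmono eb b_n[OF ij(2)] by blast
    have c4: "f (b j) < f (e j)" using fmono bq(2) e_n[OF ij(2)] by blast
    have c5: "f (e j) < fst (xpt P (3 * n div 4 - 1))"
    proof -
      have "3 * n div 4 - 1 = 3*q - 1" using n4 by simp
      moreover have "3*q - 1 < n" using n4 qpos by simp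
      moreover have "e j < 3*q - 1" using e_le[OF ij(2)] qpos by linarith
      ultimately show ?thesis using fxp fmono by metis
    qed
    have "\<not> (1/2 \<le> w i / w j \<and> w i / w j \<le> 2)"
      using neg c1 c2 c3 c4 c5 sc[OF im] sc[OF ij(2)] unfolding w_def by blast
    thus ?thesis using wpos[OF im] wpos[OF ij(2)] by (auto simp: field_simps)
  qed
  define W where "W = w ` {..<m}"
  have injw: "inj_on w {..<m}"
  proof (rule inj_onI)
    fix i j assume h: "i \<in> {..<m}" "j \<in> {..<m}" "w i = w j"
    show "i = j"
    proof (rule ccontr)
      assume "i \<noteq> j"
      hence "i < j \<or> j < i" by arith
      thus False using sep h wpos by (metis lessThan_iff less_add_same_cancel2 mult_2 not_less_iff_gr_or_eq)
    qed
  qed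
  have cW: "card W = m" unfolding W_def using card_image[OF injw] by simp
  have Wne: "W \<noteq> {}" unfolding W_def using m2 by (metis empty_iff image_is_empty lessThan_iff less_le_trans zero_less_numeral)
  have Wfin: "finite W" unfolding W_def by simp
  have Wge: "\<forall>x\<in>W. x \<ge> real s - 1" unfolding W_def using w_ge by auto
  have Wsep: "\<forall>x\<in>W. \<forall>y\<in>W. x < y \<longrightarrow> 2*x < y"
  proof (intro ballI impI)
    fix x y assume h: "x \<in> W" "y \<in> W" "x < y"
    then obtain i j where ij: "i < m" "j < m" "x = w i" "y = w j" unfolding W_def by auto
    have "i \<noteq> j" using h ij by auto
    hence "i < j \<or> j < i" by arith
    thus "2*x < y" using sep ij h wpos by (metis less_trans mult_2 not_less_iff_gr_or_eq add_less_same_cancel2 linorder_not_less order_less_le)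
  qed
  have MaxW: "Max W \<ge> 2^(m-1) * (real s - 1)"
    using geom[OF Wfin Wne Wge _ Wsep] s32 cW by simp
  obtain i0 where i0: "i0 < m" "Max W = w i0" using Max_in[OF Wfin Wne] unfolding W_def by auto
  define S where "S = point_set_size P"
  have absf: "\<bar>f l\<bar> \<le> S" if l: "l < n" for l
  proof -
    obtain p where p: "p \<in> P" "fst p = f l" using fP[OF l] by blast
    have "max \<bar>fst p\<bar> \<bar>snd p\<bar> \<le> S" unfolding S_def point_set_size_def
      using hb(1) p(1) by (intro Max_ge) auto
    thus ?thesis using p by simp
  qed
  have "w i0 \<le> 2 * S" unfolding w_def using absf[OF e_n[OF i0(1)]] absf[OF b_n[OF i0(1)]] by linarith
  hence S1: "2 * S \<ge> 2^(m-1) * (real s - 1)" using MaxW i0 by simp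
  have "m - 1 = Suc (m-2)" using m2 by simp
  hence "(2::real)^(m-1) = 2 * 2^(m-2)" by simp
  hence S2: "S \<ge> 2^(m-2) * (real s - 1)" using S1 by simp
  have s_half: "real s - 1 \<ge> 2^(k-t-1)"
  proof -
    have "k - t = Suc (k-t-1)" using tb(2) by simp
    hence "real s = 2 * 2^(k-t-1)" unfolding s_def by (metis of_nat_numeral of_nat_power power_Suc)
    moreover have "(2::real)^(k-t-1) \<ge> 1" by simp
    ultimately show ?thesis by simp
  qed
  have S3: "S \<ge> 2^(m-2) * 2^(k-t-1)"
    using S2 s_half by (meson order_trans mult_left_mono zero_le_power zero_le_numeral)
  have expo: "2^(t-1) \<le> (m-2) + (k-t-1)" unfolding m_def using tb(2) m2 unfolding m_def by linarith
  have S4: "S \<ge> 2^(2^(t-1))"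
  proof -
    have "(2::real)^(2^(t-1)) \<le> 2^((m-2) + (k-t-1))" by (intro power_increasing expo) auto
    thus ?thesis using S3 by (simp add: power_add)
  qed
  have "real n powr ((1/2) * log 2 (real n)) = 2 powr (real k * (real k / 2))"
  proof -
    have rn: "real n = 2 powr real k" unfolding n_def by (simp add: powr_realpow)
    have "log 2 (real n) = real k" unfolding rn by simp
    thus ?thesis unfolding rn by (simp add: powr_powr)
  qed
  also have "\<dots> \<le> 2 powr (real (2^(t-1)))"
  proof -
    have "real k * (real k / 2) = real k ^ 2 / 2" by (simp add: power2_eq_square)
    also have "\<dots> \<le> 2^t / 2" using tb(1) by simp
    also have "(2::real)^t / 2 = real (2^(t-1))"
    proof -
      have "t = Suc (t-1)" using t8 by simp
      hence "(2::real)^t = 2 * 2^(t-1)" by (metis power_Suc)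
      thus ?thesis by simp
    qed
    finally show ?thesis by simp
  qed
  also have "\<dots> = 2^(2^(t-1))" by (rule powr_realpow) simp
  also have "\<dots> \<le> S" using S4 .
  finally show "point_set_size P \<ge> real n powr ((1/2) * log 2 (real n))" unfolding S_def .
qed

end
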